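(* Let $J$ be a nonempty basic cylinder in $M_a$ and $p\in J$. Then $$\mathrm{GS}(J,p)=\Big\{p+\sum_{i\in\Lambda(J)}\alpha_ie_i\in M_a:\ \alpha_i\in\mathbb R \text{ for all } i\in\Lambda(J)\Big\}.$$
   Context: Let $a=\{a_i\}$ be a sequence of positive reals with $\sum_i a_i^2<\infty$, $M_a=\{x\in\mathbb{R}^{\mathbb N}:\sum_i a_i^2x_i^2<\infty\}$ with inner product $\langle x,y\rangle_a=\sum_i a_i^2x_iy_i$ and norm $\|\cdot\|_a$. $e_i$ denotes the sequence with $1$ in position $i$ and $0$ elsewhere; infinite sums are $\|\cdot\|_a$-limits of partial sums. For nonempty $E\subset M_a$, $\Lambda(E)$ is the set of $i$ for which there exist $x\in E$ and $\alpha\ne0$ with $x+\alpha e_i\in E$. For $p\in E$, $\mathrm{GS}(E,p)=\{p+\sum_i\alpha_i(x_i-p)\in M_a: x_i\in E,\ \alpha_i\in\mathbb R\}$, the index running over a finite or countable subset of $\mathbb N$. A basic cylinder is a set $J=\prod_{i=1}^\infty J_i$ where, for some $n\in\mathbb N$ and pairwise disjoint $\Lambda_1,\dots,\Lambda_4\subset\{1,\dots,n\}$: $J_i=[0,p_{2i}]$ ($i\in\Lambda_1$), $[p_{1i},p_{2i}]$ ($i\in\Lambda_2$), $[p_{1i},1]$ ($i\in\Lambda_3$), $\{p_{1i}\}$ ($i\in\Lambda_4$), $[0,1]$ otherwise, with $0<p_{1i}<p_{2i}<1$ for $i\in\Lambda_1\cup\Lambda_2\cup\Lambda_3$ and $0\le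 p_{1i}\le1$ for $i\in\Lambda_4$. *)

theory Defs
  imports "HOL-Analysis.Analysis"
begin

text \<open>Sequences are functions nat => real; the paper's index set N = {1,2,...} is
  identified with nat = {0,1,...} (shift by one).\<close>

definition Ma :: "(nat \<Rightarrow> real) \<Rightarrow> (nat \<Rightarrow> real) set" where
  "Ma a = {x. summable (\<lambda>i. (a i)\<^sup>2 * (x i)\<^sup>2)}"

definition inner_a :: "(nat \<Rightarrow> real) \<Rightarrow> (nat \<Rightarrow> real) \<Rightarrow> (nat \<Rightarrow> real) \<Rightarrow> real" where
  "inner_a a x y = (\<Sum>i. (a i)\<^sup>2 * x i * y i)"

definition norm_a :: "(nat \<Rightarrow> real) \<Rightarrow> (nat \<Rightarrow> real) \<Rightarrow> real" where
  "norm_a a x = sqrt (inner_a a x x)"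

definition e :: "nat \<Rightarrow> nat \<Rightarrow> real" where
  "e i = (\<lambda>j. if j = i then 1 else 0)"

definition a_limit :: "(nat \<Rightarrow> real) \<Rightarrow> (nat \<Rightarrow> nat \<Rightarrow> real) \<Rightarrow> (nat \<Rightarrow> real) \<Rightarrow> bool" where
  "a_limit a S y \<longleftrightarrow> y \<in> Ma a \<and>
     (\<forall>\<epsilon>>0. \<forall>\<^sub>F N in sequentially.
        (\<lambda>j. S N j - y j) \<in> Ma a \<and> norm_a a (\<lambda>j. S N j - y j) < \<epsilon>)"

definition Lam :: "(nat \<Rightarrow> real) set \<Rightarrow> nat set" where
  "Lam E = {i. \<exists>x\<in>E. \<exists>\<alpha>::real. \<alpha> \<noteq> 0 \<and> (\<lambda>j. x j + \<alpha> * e i j) \<in> E}"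

text \<open>GS(E,p): p + sum over a (finite or countable) index set I of alpha_i (x_i - p),
  the infinite sum being the norm_a-limit of the partial sums taken in increasing
  order of the indices; the result is required to lie in M_a.\<close>
definition GS :: "(nat \<Rightarrow> real) \<Rightarrow> (nat \<Rightarrow> real) set \<Rightarrow> (nat \<Rightarrow> real) \<Rightarrow> (nat \<Rightarrow> real) set" where
  "GS a E p = {y. \<exists>(I::nat set) (x::nat \<Rightarrow> nat \<Rightarrow> real) (\<alpha>::nat \<Rightarrow> real).
      (\<forall>i\<in>I. x i \<in> E) \<and>
      a_limit a (\<lambda>N j. p j + (\<Sum>i\<in>I \<inter> {..<N}. \<alpha> i * (x i j - p j))) y}"

definition basic_cylinder :: "(nat \<Rightarrow> real) set \<Rightarrow> bool" where
  "basic_cylinder J \<longleftrightarrow> (\<exists>(n::nat) L1 L2 L3 L4 (p1::nat \<Rightarrow> real) (p2::nat \<Rightarrow> real).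
     L1 \<subseteq> {..<n} \<and> L2 \<subseteq> {..<n} \<and> L3 \<subseteq> {..<n} \<and> L4 \<subseteq> {..<n} \<and>
     L1 \<inter> L2 = {} \<and> L1 \<inter> L3 = {} \<and> L1 \<inter> L4 = {} \<and>
     L2 \<inter> L3 = {} \<and> L2 \<inter> L4 = {} \<and> L3 \<inter> L4 = {} \<and>
     (\<forall>i \<in> L1 \<union> L2 \<union> L3. 0 < p1 i \<and> p1 i < p2 i \<and> p2 i < 1) \<and>
     (\<forall>i \<in> L4. 0 \<le> p1 i \<and> p1 i \<le> 1) \<and>
     J = {x. \<forall>i. x i \<in> (if i \<in> L1 then {0..p2 i}
                          else if i \<in> L2 then {p1 i..p2 i}
                          else if i \<in> L3 then {p1 i..1}
                          else if i \<in> L4 then {p1 i}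
                          else {0..1})})"

end

theory Submission
  imports Defs
begin

lemma Ma_diff:
  assumes "x \<in> Ma a" "y \<in> Ma a"
  shows "(\<lambda>j. x j - y j) \<in> Ma a"
proof -
  have s: "summable (\<lambda>i. 2 * ((a i)\<^sup>2 * (x i)\<^sup>2) + 2 * ((a i)\<^sup>2 * (y i)\<^sup>2))"
    using assms unfolding Ma_def by (intro summable_add summable_mult) auto
  have "\<And>i. norm ((a i)\<^sup>2 * (x i - y i)\<^sup>2) \<le> 2 * ((a i)\<^sup>2 * (x i)\<^sup>2) + 2 * ((a i)\<^sup>2 * (y i)\<^sup>2)"
  proof -
    fix i
    have "(x i - y i)\<^sup>2 \<le> 2 * (x i)\<^sup>2 + 2 * (y i)\<^sup>2"
      using zero_le_power2[of "x i + y i"] unfolding power2_sum power2_diff by linarith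
    then have "(a i)\<^sup>2 * (x i - y i)\<^sup>2 \<le> (a i)\<^sup>2 * (2 * (x i)\<^sup>2 + 2 * (y i)\<^sup>2)"
      by (intro mult_left_mono) auto
    then show "norm ((a i)\<^sup>2 * (x i - y i)\<^sup>2) \<le> 2 * ((a i)\<^sup>2 * (x i)\<^sup>2) + 2 * ((a i)\<^sup>2 * (y i)\<^sup>2)"
      by (simp add: algebra_simps)
  qed
  then show ?thesis unfolding Ma_def
    by (auto intro: summable_comparison_test[OF _ s])
qed

lemma limit_pointwise:
  assumes lim: "a_limit a S y" and pos: "0 < a j" and c: "\<And>N. S N j = c"
  shows "y j = c"
proof (rule ccontr)
  assume ne: "y j \<noteq> c"
  define \<epsilon> where "\<epsilon> = a j * \<bar>c - y j\<bar>"
  have "\<epsilon> > 0" using ne pos by (simp add: \<epsilon>_def)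
  then have "\<forall>\<^sub>F N in sequentially. (\<lambda>j. S N j - y j) \<in> Ma a \<and> norm_a a (\<lambda>j. S N j - y j) < \<epsilon>"
    using lim unfolding a_limit_def by blast
  then obtain N0 where "\<forall>n\<ge>N0. (\<lambda>j. S n j - y j) \<in> Ma a \<and> norm_a a (\<lambda>j. S n j - y j) < \<epsilon>"
    by (auto simp: eventually_sequentially)
  then obtain N where N: "(\<lambda>j. S N j - y j) \<in> Ma a" "norm_a a (\<lambda>j. S N j - y j) < \<epsilon>"
    by blast
  define z where "z = (\<lambda>j. S N j - y j)"
  have sm: "summable (\<lambda>i. (a i)\<^sup>2 * z i * z i)"
    using N(1) unfolding Ma_def z_def by (simp add: power2_eq_square mult.assoc)
  have "sum (\<lambda>i. (a i)\<^sup>2 * z i * z i) {j} \<le> inner_a a z z"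
    unfolding inner_a_def by (rule sum_le_suminf[OF sm]) (auto simp: mult.assoc)
  then have "(a j * \<bar>c - y j\<bar>)\<^sup>2 \<le> inner_a a z z"
    using c[of N] by (simp add: z_def power2_eq_square abs_mult_self algebra_simps)
  then have "sqrt ((a j * \<bar>c - y j\<bar>)\<^sup>2) \<le> norm_a a z"
    unfolding norm_a_def by (rule real_sqrt_le_mono)
  then have "\<epsilon> \<le> norm_a a z" using pos by (simp add: \<epsilon>_def)
  then show False using N(2) by (simp add: z_def)
qed

lemma limit_construct:
  assumes y: "y \<in> Ma a" and p: "p \<in> Ma a" and out: "\<And>j. j \<notin> L \<Longrightarrow> y j = p j"
    and S: "\<And>N j. S N j = p j + (if j \<in> L \<inter> {..<N} then y j - p j else 0)"
  shows "a_limit a S y"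
  unfolding a_limit_def
proof (intro conjI y allI impI)
  fix \<epsilon> :: real assume eps: "\<epsilon> > 0"
  define g where "g = (\<lambda>j. (a j)\<^sup>2 * (p j - y j)\<^sup>2)"
  have gs: "summable g" using Ma_diff[OF p y] unfolding Ma_def g_def by simp
  have eqS: "S N j - y j = (if j \<in> {..<N} then 0 else p j - y j)" for N j
    using out[of j] by (auto simp: S)
  have sumsN: "(\<lambda>j. (a j)\<^sup>2 * (\<lambda>j. S N j - y j) j * (\<lambda>j. S N j - y j) j) sums (suminf g - sum g {..<N})" for N
  proof -
    have "(\<lambda>j. if j \<in> {..<N} then 0 else g j) sums (suminf g - sum g {..<N})"
      by (rule sums_If_finite_set'[OF summable_sums[OF gs]]) (auto simp: sum_negf)
    moreover have "(\<lambda>j. if j \<in> {..<N} then 0 else g j) = (\<lambda>j. (a j)\<^sup>2 * (\<lambda>j. S N j - y j) j * (\<lambda>j. S N j - y j) j)"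
      by (auto simp: eqS g_def fun_eq_iff power2_eq_square)
    ultimately show ?thesis by simp
  qed
  have inMa: "(\<lambda>j. S N j - y j) \<in> Ma a" for N
    using sums_summable[OF sumsN[of N]] unfolding Ma_def by (simp add: power2_eq_square mult.assoc)
  have nrm: "norm_a a (\<lambda>j. S N j - y j) = sqrt (suminf g - sum g {..<N})" for N
    unfolding norm_a_def inner_a_def using sums_unique[OF sumsN[of N]] by simp
  have "(\<lambda>N. sum g {..<N}) \<longlonglongrightarrow> suminf g" using summable_LIMSEQ[OF gs] .
  then have "(\<lambda>N. suminf g - sum g {..<N}) \<longlonglongrightarrow> suminf g - suminf g"
    by (intro tendsto_diff tendsto_const)
  then have "(\<lambda>N. sqrt (suminf g - sum g {..<N})) \<longlonglongrightarrow> sqrt 0"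
    by (intro tendsto_real_sqrt) simp
  then have "\<forall>\<^sub>F N in sequentially. dist (sqrt (suminf g - sum g {..<N})) 0 < \<epsilon>"
    using eps by (simp add: tendsto_iff)
  then have "\<forall>\<^sub>F N in sequentially. sqrt (suminf g - sum g {..<N}) < \<epsilon>"
    by (rule eventually_mono) simp
  then show "\<forall>\<^sub>F N in sequentially. (\<lambda>j. S N j - y j) \<in> Ma a \<and> norm_a a (\<lambda>j. S N j - y j) < \<epsilon>"
    by (rule eventually_mono) (simp add: inMa nrm)
qed

lemma cyl_props:
  assumes "basic_cylinder J" and "\<And>i. 0 < a i" and "summable (\<lambda>i. (a i)\<^sup>2)"
  shows "J \<subseteq> Ma a" and "\<And>p x j. p \<in> J \<Longrightarrow> x \<in> J \<Longrightarrow> p(j := x j) \<in> J"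
proof -
  obtain n L1 L2 L3 L4 p1 p2 where
    h: "\<forall>i \<in> L1 \<union> L2 \<union> L3. 0 < p1 i \<and> p1 i < (p2::nat\<Rightarrow>real) i \<and> p2 i < 1"
       "\<forall>i \<in> L4. 0 \<le> p1 i \<and> p1 i \<le> 1"
       and J: "J = {x. \<forall>i. x i \<in> (if i \<in> L1 then {0..p2 i}
                          else if i \<in> L2 then {p1 i..p2 i}
                          else if i \<in> L3 then {p1 i..1}
                          else if i \<in> L4 then {p1 i}
                          else {0..1})}"
    using assms(1) unfolding basic_cylinder_def by blast
  define F where "F = (\<lambda>i. (if i \<in> L1 then {0..p2 i}
                          else if i \<in> L2 then {p1 i..p2 i}
                          else if i \<in> L3 then {p1 i..1}
                          else if i \<in> L4 then {p1 i}
                          else {0..1}))"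
  have JF: "J = {x. \<forall>i. x i \<in> F i}" unfolding J F_def by simp
  have F01: "F i \<subseteq> {0..1}" for i
    using h[rule_format, of i] unfolding F_def by auto
  show "\<And>p x j. p \<in> J \<Longrightarrow> x \<in> J \<Longrightarrow> p(j := x j) \<in> J"
    unfolding JF by auto
  show "J \<subseteq> Ma a"
  proof
    fix x assume "x \<in> J"
    then have x01: "0 \<le> x i \<and> x i \<le> 1" for i
      using F01[of i] unfolding JF by auto
    have "norm ((a i)\<^sup>2 * (x i)\<^sup>2) \<le> (a i)\<^sup>2" for i
    proof -
      have "(x i)\<^sup>2 \<le> 1" using x01[of i] by (simp add: power_le_one)
      then show ?thesis by (simp add: mult_left_le)
    qed
    then show "x \<in> Ma a" unfolding Ma_def
      by (auto intro: summable_comparison_test[OF _ assms(3)])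
  qed
qed

theorem theorem3p5:
  fixes a :: "nat \<Rightarrow> real" and J :: "(nat \<Rightarrow> real) set" and p :: "nat \<Rightarrow> real"
  assumes "\<forall>i. 0 < a i"
    and "summable (\<lambda>i. (a i)\<^sup>2)"
    and "basic_cylinder J"
    and "J \<noteq> {}"
    and "p \<in> J"
  shows "GS a J p =
    {y. \<exists>\<alpha>::nat \<Rightarrow> real.
          a_limit a (\<lambda>N j. p j + (\<Sum>i\<in>Lam J \<inter> {..<N}. \<alpha> i * e i j)) y}"
proof -
  have apos: "\<And>i. 0 < a i" using assms(1) by blast
  note cp = cyl_props[OF assms(3) apos assms(2)]
  have pM: "p \<in> Ma a" using cp(1) assms(5) by blast
  define L where "L = Lam J"
  have notL: "x j = p j" if "j \<notin> L" "x \<in> J" for x j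
  proof (rule ccontr)
    assume ne: "x j \<noteq> p j"
    have "p(j := x j) \<in> J" using cp(2)[OF assms(5) that(2)] .
    moreover have "p(j := x j) = (\<lambda>k. p k + (x j - p j) * e j k)"
      by (auto simp: e_def fun_eq_iff)
    ultimately have "(\<lambda>k. p k + (x j - p j) * e j k) \<in> J" by simp
    then have "j \<in> Lam J" unfolding Lam_def
      using ne assms(5) by (intro CollectI bexI[of _ p] exI[of _ "x j - p j"]) auto
    then show False using that(1) L_def by simp
  qed
  have inL: "\<exists>\<beta>. \<beta> \<noteq> 0 \<and> p(j := p j + \<beta>) \<in> J" if jL: "j \<in> L" for j
  proof -
    obtain x \<alpha> where x: "x \<in> J" "\<alpha> \<noteq> 0" "(\<lambda>k. x k + \<alpha> * e j k) \<in> J"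
      using jL unfolding L_def Lam_def by blast
    show ?thesis
    proof (cases "x j = p j")
      case True
      have "p(j := (\<lambda>k. x k + \<alpha> * e j k) j) \<in> J" using cp(2)[OF assms(5) x(3)] .
      then have "p(j := p j + \<alpha>) \<in> J" using True by (simp add: e_def)
      then show ?thesis using x(2) by (intro exI[of _ \<alpha>]) simp
    next
      case False
      have "p(j := x j) \<in> J" using cp(2)[OF assms(5) x(1)] .
      then have "p(j := p j + (x j - p j)) \<in> J" by simp
      then show ?thesis using False by (intro exI[of _ "x j - p j"]) simp
    qed
  qed
  define \<beta> where "\<beta> j = (SOME b. b \<noteq> 0 \<and> p(j := p j + b) \<in> J)" for j
  have \<beta>: "\<beta> j \<noteq> 0 \<and> p(j := p j + \<beta> j) \<in> J" if "j \<in> L" for j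
    unfolding \<beta>_def by (rule someI_ex[OF inL[OF that]])
  define C where "C = {y. y \<in> Ma a \<and> (\<forall>j. j \<notin> L \<longrightarrow> y j = p j)}"
  have sumE: "(\<Sum>i\<in>L \<inter> {..<N}. \<alpha> i * e i j) = (if j \<in> L \<inter> {..<N} then \<alpha> j else 0)"
    for \<alpha> :: "nat \<Rightarrow> real" and N j
    by (simp add: e_def if_distrib sum.delta cong: if_cong)
  have "GS a J p = C"
  proof
    show "GS a J p \<subseteq> C"
    proof
      fix y assume "y \<in> GS a J p"
      then obtain I x \<alpha> where xi: "\<forall>i\<in>I. x i \<in> J" and
        lim: "a_limit a (\<lambda>N j. p j + (\<Sum>i\<in>I \<inter> {..<N}. \<alpha> i * (x i j - p j))) y"
        unfolding GS_def by blast
      have "y j = p j" if "j \<notin> L" for j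
        by (rule limit_pointwise[OF lim apos]) (simp add: notL[OF that] xi)
      moreover have "y \<in> Ma a" using lim unfolding a_limit_def by blast
      ultimately show "y \<in> C" unfolding C_def by blast
    qed
  next
    show "C \<subseteq> GS a J p"
    proof
      fix y assume y: "y \<in> C"
      define x where "x = (\<lambda>i. p(i := p i + \<beta> i))"
      define \<alpha> where "\<alpha> = (\<lambda>i. (y i - p i) / \<beta> i)"
      have xi: "\<forall>i\<in>L. x i \<in> J" using \<beta> by (simp add: x_def)
      have "(\<Sum>i\<in>L \<inter> {..<N}. \<alpha> i * (x i j - p j)) = (\<Sum>i\<in>L \<inter> {..<N}. ((y i - p i) / \<beta> i * \<beta> i) * e i j)" for N j
        by (rule sum.cong) (auto simp: x_def \<alpha>_def e_def)
      also have "... N j = (\<Sum>i\<in>L \<inter> {..<N}. (y i - p i) * e i j)" for N j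
        by (rule sum.cong) (use \<beta> in auto)
      finally have eq: "(\<Sum>i\<in>L \<inter> {..<N}. \<alpha> i * (x i j - p j)) = (if j \<in> L \<inter> {..<N} then y j - p j else 0)" for N j
        by (simp add: sumE)
      have "a_limit a (\<lambda>N j. p j + (\<Sum>i\<in>L \<inter> {..<N}. \<alpha> i * (x i j - p j))) y"
        by (rule limit_construct[where L=L]) (use y pM in \<open>auto simp: C_def eq\<close>)
      then show "y \<in> GS a J p" unfolding GS_def using xi by blast
    qed
  qed
  moreover have "{y. \<exists>\<alpha>::nat \<Rightarrow> real.
          a_limit a (\<lambda>N j. p j + (\<Sum>i\<in>Lam J \<inter> {..<N}. \<alpha> i * e i j)) y} = C"
  proof
    show "{y. \<exists>\<alpha>::nat \<Rightarrow> real.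
          a_limit a (\<lambda>N j. p j + (\<Sum>i\<in>Lam J \<inter> {..<N}. \<alpha> i * e i j)) y} \<subseteq> C"
    proof
      fix y assume "y \<in> {y. \<exists>\<alpha>::nat \<Rightarrow> real.
          a_limit a (\<lambda>N j. p j + (\<Sum>i\<in>Lam J \<inter> {..<N}. \<alpha> i * e i j)) y}"
      then obtain \<alpha> where lim: "a_limit a (\<lambda>N j. p j + (\<Sum>i\<in>L \<inter> {..<N}. \<alpha> i * e i j)) y"
        unfolding L_def by blast
      have "y j = p j" if "j \<notin> L" for j
        by (rule limit_pointwise[OF lim apos]) (simp add: sumE that)
      moreover have "y \<in> Ma a" using lim unfolding a_limit_def by blast
      ultimately show "y \<in> C" unfolding C_def by blast
    qed
  next
    show "C \<subseteq> {y. \<exists>\<alpha>::nat \<Rightarrow> real.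
          a_limit a (\<lambda>N j. p j + (\<Sum>i\<in>Lam J \<inter> {..<N}. \<alpha> i * e i j)) y}"
    proof
      fix y assume y: "y \<in> C"
      have "a_limit a (\<lambda>N j. p j + (\<Sum>i\<in>L \<inter> {..<N}. (\<lambda>i. y i - p i) i * e i j)) y"
        by (rule limit_construct[where L=L]) (use y pM in \<open>auto simp: C_def sumE\<close>)
      then show "y \<in> {y. \<exists>\<alpha>::nat \<Rightarrow> real.
          a_limit a (\<lambda>N j. p j + (\<Sum>i\<in>Lam J \<inter> {..<N}. \<alpha> i * e i j)) y}"
        unfolding L_def by (intro CollectI exI[of _ "\<lambda>i. y i - p i"])
    qed
  qed
  ultimately show ?thesis by simp
qed

end
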